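(* Let $\Omega\subset\mathbb{R}^n$ be a smoothly bounded domain, $0<\beta<1$ and $s\in\mathbb{R}\setminus\{0\}$. Assume $u\in C^{1,\beta}(\overline{\Omega})$ satisfies $\inf_{x\in\overline{\Omega}}|\nabla u(x)|\geq\lambda_1$ for some $\lambda_1>0$. Let, for $0<t<1$, $k_t=\min\{k\in\mathbb{N}: k\geq|\log t|/\log 2\}$. Then: (i) if $s\geq 1$, $\||\nabla u|^s\|_{C^{0,\beta}}\leq\|\nabla u\|_{L^\infty}^s+2s\|\nabla u\|_{C^{0,\beta}}^s$; (ii) if $0<s<1$, $\||\nabla u|^s\|_{C^{0,\beta}}\leq\|\nabla u\|_{L^\infty}^s+\frac{2s}{\prod_{j=1}^{k_s}\lambda_1^{2^{j-1}s}}\|\nabla u\|_{C^{0,\beta}}^{2^{k_s}s}$; (iii) if $-1<s<0$, $\||\nabla u|^s\|_{C^{0,\beta}}\leq\lambda_1^s+\frac{2|s|}{\lambda_1^{2|s|}\prod_{j=1}^{k_{|s|}}\lambda_1^{2^{j-1}|s|}}\|\nabla u\|_{C^{0,\beta}}^{2^{k_{|s|}}|s|}$; (iv) if $s\leq -1$, $\||\nabla u|^s\|_{C^{0,\beta}}\leq\lambda_1^s+2|s|\lambda_1^{2s}\|\nabla u\|_{C^{0,\beta}}^{|s|}$.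
   Context: All norms are over $\Omega$; $|\cdot|$ is the Euclidean norm on $\mathbb{R}^n$. For a (scalar or vector valued) function $w$, $\|w\|_{C^{0,\beta}}=\|w\|_{L^\infty}+\sup_{x\neq y}\frac{|w(x)-w(y)|}{|x-y|^\beta}$. *)

theory Defs
  imports "HOL-Analysis.Analysis"
begin

text \<open>C-infinity functions on the whole space: there is a family of functions containing f,
  all everywhere differentiable, closed under taking partial derivatives.\<close>
definition smooth_fun :: "('a::euclidean_space \<Rightarrow> real) \<Rightarrow> bool" where
  "smooth_fun f \<longleftrightarrow> (\<exists>F. f \<in> F \<and>
      (\<forall>g\<in>F. g differentiable_on UNIV \<and>
         (\<forall>i\<in>Basis. (\<lambda>x. frechet_derivative g (at x) i) \<in> F)))"

definition smooth_bounded_domain :: "'a::euclidean_space set \<Rightarrow> bool" where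
  "smooth_bounded_domain \<Omega> \<longleftrightarrow> open \<Omega> \<and> connected \<Omega> \<and> bounded \<Omega> \<and> \<Omega> \<noteq> {} \<and>
     (\<exists>\<rho>. smooth_fun \<rho> \<and> \<Omega> = {x. \<rho> x < 0} \<and>
        (\<forall>x. \<rho> x = 0 \<longrightarrow> frechet_derivative \<rho> (at x) \<noteq> (\<lambda>h. 0)))"

definition sup_norm :: "'a set \<Rightarrow> ('a \<Rightarrow> 'b::real_normed_vector) \<Rightarrow> real" where
  "sup_norm \<Omega> w = (SUP x\<in>\<Omega>. norm (w x))"

definition holder_seminorm :: "real \<Rightarrow> 'a::metric_space set \<Rightarrow> ('a \<Rightarrow> 'b::real_normed_vector) \<Rightarrow> real" where
  "holder_seminorm \<beta> \<Omega> w =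
     (SUP p\<in>{(x,y). x \<in> \<Omega> \<and> y \<in> \<Omega> \<and> x \<noteq> y}. norm (w (fst p) - w (snd p)) / (dist (fst p) (snd p) powr \<beta>))"

definition holder_norm :: "real \<Rightarrow> 'a::metric_space set \<Rightarrow> ('a \<Rightarrow> 'b::real_normed_vector) \<Rightarrow> real" where
  "holder_norm \<beta> \<Omega> w = sup_norm \<Omega> w + holder_seminorm \<beta> \<Omega> w"

text \<open>u in C^{1,beta}(closure Omega) with gradient Du (on Omega; Du is uniformly
  beta-Hoelder and bounded, hence extends continuously to the closure).\<close>
definition C1_holder :: "real \<Rightarrow> 'a::euclidean_space set \<Rightarrow> ('a \<Rightarrow> real) \<Rightarrow> ('a \<Rightarrow> 'a) \<Rightarrow> bool" where
  "C1_holder \<beta> \<Omega> u Du \<longleftrightarrow> continuous_on (closure \<Omega>) u \<and>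
     (\<forall>x\<in>\<Omega>. (u has_derivative (\<lambda>h. Du x \<bullet> h)) (at x)) \<and>
     bounded (Du ` \<Omega>) \<and>
     (\<exists>C. \<forall>x\<in>\<Omega>. \<forall>y\<in>\<Omega>. norm (Du x - Du y) \<le> C * dist x y powr \<beta>)"

definition k_idx :: "real \<Rightarrow> nat" where
  "k_idx t = (LEAST k::nat. real k \<ge> \<bar>ln t\<bar> / ln 2)"

end

theory Submission imports Defs begin

lemma powr_lip_aux:
  fixes l M x y s :: real
  assumes "0 < l" "l \<le> x" "x < y" "y \<le> M"
  shows "\<bar>x powr s - y powr s\<bar> \<le> \<bar>s\<bar> * max (l powr (s-1)) (M powr (s-1)) * \<bar>x-y\<bar>"
proof -
  have "\<And>z. x \<le> z \<Longrightarrow> z \<le> y \<Longrightarrow> DERIV (\<lambda>z. z powr s) z :> s * z powr (s - 1)"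
    using assms by (intro has_real_derivative_powr) auto
  from MVT2[OF assms(3) this] obtain z where z: "x < z" "z < y"
    "y powr s - x powr s = (y - x) * (s * z powr (s - 1))" by blast
  have zb: "z powr (s-1) \<le> max (l powr (s-1)) (M powr (s-1))"
  proof (cases "s - 1 \<ge> 0")
    case True
    then have "z powr (s-1) \<le> M powr (s-1)" using z assms by (intro powr_mono2) auto
    then show ?thesis by linarith
  next
    case False
    then have "z powr (s-1) \<le> l powr (s-1)" using z assms by (intro powr_mono2') auto
    then show ?thesis by linarith
  qed
  have "\<bar>x powr s - y powr s\<bar> = \<bar>s\<bar> * z powr (s-1) * \<bar>x-y\<bar>"
  proof -
    have "\<bar>x powr s - y powr s\<bar> = \<bar>y powr s - x powr s\<bar>" by simp
    also have "\<dots> = \<bar>y - x\<bar> * (\<bar>s\<bar> * \<bar>z powr (s - 1)\<bar>)" using z(3) by (simp add: abs_mult)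
    finally show ?thesis using z assms by (simp add: abs_minus_commute)
  qed
  also have "\<dots> \<le> \<bar>s\<bar> * max (l powr (s-1)) (M powr (s-1)) * \<bar>x-y\<bar>"
    by (intro mult_right_mono mult_left_mono zb) auto
  finally show ?thesis .
qed

lemma powr_lip:
  fixes l M x y s :: real
  assumes "0 < l" "l \<le> x" "x \<le> M" "l \<le> y" "y \<le> M"
  shows "\<bar>x powr s - y powr s\<bar> \<le> \<bar>s\<bar> * max (l powr (s-1)) (M powr (s-1)) * \<bar>x-y\<bar>"
proof -
  consider "x < y" | "x = y" | "y < x" by linarith
  then show ?thesis
  proof cases
    case 1 then show ?thesis using powr_lip_aux assms by blast
  next
    case 2 then show ?thesis by simp
  next
    case 3 then show ?thesis using powr_lip_aux[of l y x M s] assms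
      by (simp add: abs_minus_commute)
  qed
qed

lemma k_idx_ge:
  fixes t :: real
  assumes "0 < t" "t < 1"
  shows "1 \<le> 2 ^ k_idx t * t"
proof -
  have ex: "\<exists>k::nat. real k \<ge> \<bar>ln t\<bar> / ln 2" by (rule real_arch_simple)
  have k: "real (k_idx t) \<ge> \<bar>ln t\<bar> / ln 2"
    unfolding k_idx_def by (rule LeastI_ex[OF ex])
  have "\<bar>ln t\<bar> = - ln t" using assms by simp
  then have "real (k_idx t) * ln 2 \<ge> - ln t" using k by (simp add: field_simps)
  then have "ln (2 ^ k_idx t * t) \<ge> 0" using assms by (simp add: ln_mult ln_realpow)
  then show ?thesis using assms by (simp add: ln_ge_zero_iff)
qed

lemma prod_pow:
  fixes l a :: real
  assumes "0 < l"
  shows "(\<Prod>j=1..k. l powr (2 ^ (j - 1) * a)) = l powr ((2 ^ k - 1) * a)"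
proof (induction k)
  case 0 then show ?case using assms by simp
next
  case (Suc k)
  have "(\<Prod>j=1..Suc k. l powr (2 ^ (j - 1) * a)) = l powr ((2 ^ k - 1) * a) * l powr (2 ^ k * a)"
    using Suc assms by (simp add: prod.nat_ivl_Suc' mult.commute)
  also have "\<dots> = l powr ((2 ^ Suc k - 1) * a)"
    using assms by (simp add: powr_add[symmetric] algebra_simps)
  finally show ?case .
qed

lemma key:
  fixes l N H e :: real
  assumes "0 < l" "l \<le> N" "0 \<le> H" "H \<le> N" "1 \<le> e"
  shows "H / l \<le> (N / l) powr e"
proof -
  have "1 \<le> N / l" using assms by simp
  then have "(N/l) powr 1 \<le> (N/l) powr e" by (intro powr_mono) (use assms in auto)
  moreover have "H / l \<le> N / l" using assms by (simp add: divide_right_mono)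
  ultimately show ?thesis using assms by simp
qed

theorem lemma4p1:
  fixes \<Omega> :: "'a::euclidean_space set" and u :: "'a \<Rightarrow> real" and Du :: "'a \<Rightarrow> 'a"
    and \<beta> s lambda1 :: real
  assumes "smooth_bounded_domain \<Omega>"
    and "0 < \<beta>" and "\<beta> < 1" and "s \<noteq> 0"
    and "C1_holder \<beta> \<Omega> u Du"
    and "0 < lambda1" and "\<forall>x\<in>\<Omega>. norm (Du x) \<ge> lambda1"
  shows "(s \<ge> 1 \<longrightarrow>
           holder_norm \<beta> \<Omega> (\<lambda>x. norm (Du x) powr s)
             \<le> sup_norm \<Omega> Du powr s + 2 * s * holder_norm \<beta> \<Omega> Du powr s)
       \<and> (0 < s \<and> s < 1 \<longrightarrow>
           holder_norm \<beta> \<Omega> (\<lambda>x. norm (Du x) powr s)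
             \<le> sup_norm \<Omega> Du powr s
                + 2 * s / (\<Prod>j=1..k_idx s. lambda1 powr (2 ^ (j - 1) * s))
                  * holder_norm \<beta> \<Omega> Du powr (2 ^ k_idx s * s))
       \<and> (-1 < s \<and> s < 0 \<longrightarrow>
           holder_norm \<beta> \<Omega> (\<lambda>x. norm (Du x) powr s)
             \<le> lambda1 powr s
                + 2 * \<bar>s\<bar> / (lambda1 powr (2 * \<bar>s\<bar>) * (\<Prod>j=1..k_idx \<bar>s\<bar>. lambda1 powr (2 ^ (j - 1) * \<bar>s\<bar>)))
                  * holder_norm \<beta> \<Omega> Du powr (2 ^ k_idx \<bar>s\<bar> * \<bar>s\<bar>))
       \<and> (s \<le> -1 \<longrightarrow>
           holder_norm \<beta> \<Omega> (\<lambda>x. norm (Du x) powr s)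
             \<le> lambda1 powr s + 2 * \<bar>s\<bar> * lambda1 powr (2 * s) * holder_norm \<beta> \<Omega> Du powr \<bar>s\<bar>)"
proof -
  let ?g = "\<lambda>x. norm (Du x)"
  define M where "M = sup_norm \<Omega> Du"
  define H where "H = holder_seminorm \<beta> \<Omega> Du"
  define N where "N = M + H"
  define K where "K = max (lambda1 powr (s-1)) (M powr (s-1))"
  define P where "P = {(x,y). x \<in> \<Omega> \<and> y \<in> \<Omega> \<and> x \<noteq> y}"
  define q where "q = (\<lambda>p. norm (Du (fst p) - Du (snd p)) / (dist (fst p) (snd p) powr \<beta>))"
  have opn: "open \<Omega>" and ne: "\<Omega> \<noteq> {}" using assms(1) unfolding smooth_bounded_domain_def by auto
  from ne obtain x0 where x0: "x0 \<in> \<Omega>" by blast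
  from opn x0 obtain e where e: "e > 0" "ball x0 e \<subseteq> \<Omega>" by (meson openE)
  obtain b :: 'a where b: "b \<in> Basis" using nonempty_Basis by blast
  define x1 where "x1 = x0 + (e/2) *\<^sub>R b"
  have dx1: "dist x0 x1 = e/2" using e b by (simp add: x1_def dist_norm)
  have x1: "x1 \<in> \<Omega>" using e dx1 by (intro subsetD[OF e(2)]) auto
  have x01: "x0 \<noteq> x1" using dx1 e by auto
  from assms(5) have bdd: "bounded (Du ` \<Omega>)" and
    Cex: "\<exists>C. \<forall>x\<in>\<Omega>. \<forall>y\<in>\<Omega>. norm (Du x - Du y) \<le> C * dist x y powr \<beta>"
    unfolding C1_holder_def by auto
  from Cex obtain C where C: "\<And>x y. x\<in>\<Omega> \<Longrightarrow> y\<in>\<Omega> \<Longrightarrow> norm (Du x - Du y) \<le> C * dist x y powr \<beta>" by blast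
  from bdd obtain B where B: "\<And>x. x \<in> \<Omega> \<Longrightarrow> norm (Du x) \<le> B" unfolding bounded_iff by blast
  have bddg: "bdd_above (?g ` \<Omega>)" using B by (intro bdd_aboveI2) auto
  have gM: "\<And>x. x \<in> \<Omega> \<Longrightarrow> norm (Du x) \<le> M"
    unfolding M_def sup_norm_def by (rule cSUP_upper[OF _ bddg])
  have qC: "q p \<le> C" if pP: "p \<in> P" for p
  proof -
    obtain x y where p: "p = (x,y)" "x \<in> \<Omega>" "y \<in> \<Omega>" "x \<noteq> y" using pP unfolding P_def by (cases p) auto
    have "dist x y powr \<beta> > 0" using p by simp
    then show ?thesis using C[OF p(2,3)] unfolding q_def p(1) by (simp add: pos_divide_le_eq)
  qed
  have bddq: "bdd_above (q ` P)" using qC by (intro bdd_aboveI2) auto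
  have qH: "q (x,y) \<le> H" if "x \<in> \<Omega>" "y \<in> \<Omega>" "x \<noteq> y" for x y
  proof -
    have "(x,y) \<in> P" using that unfolding P_def by auto
    then show ?thesis unfolding H_def holder_seminorm_def q_def[symmetric] P_def[symmetric]
      by (rule cSUP_upper[OF _ bddq])
  qed
  have Pne: "P \<noteq> {}" using x0 x1 x01 unfolding P_def by auto
  have H0: "0 \<le> H" using qH[OF x0 x1 x01] unfolding q_def by (smt (verit) divide_nonneg_nonneg norm_ge_zero powr_ge_zero)
  have lM: "lambda1 \<le> M" using assms(7) x0 gM[OF x0] by force
  have M0: "0 \<le> M" using lM assms(6) by simp
  have lN: "lambda1 \<le> N" and HN: "H \<le> N" and N0: "0 < N" using lM H0 M0 assms(6) unfolding N_def by auto
  have gl: "\<And>x. x \<in> \<Omega> \<Longrightarrow> lambda1 \<le> norm (Du x)" using assms(7) by blast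
  have supb: "sup_norm \<Omega> (\<lambda>x. norm (Du x) powr s) \<le> Bs"
    if "\<And>x. x \<in> \<Omega> \<Longrightarrow> norm (Du x) powr s \<le> Bs" for Bs
    unfolding sup_norm_def using that ne by (intro cSUP_least) auto
  have semb: "holder_seminorm \<beta> \<Omega> (\<lambda>x. norm (Du x) powr s) \<le> \<bar>s\<bar> * K * H"
    unfolding holder_seminorm_def P_def[symmetric]
  proof (rule cSUP_least[OF Pne])
    fix p assume "p \<in> P"
    then obtain x y where p: "p = (x,y)" "x \<in> \<Omega>" "y \<in> \<Omega>" "x \<noteq> y" unfolding P_def by (cases p) auto
    have dpos: "dist x y powr \<beta> > 0" using p by simp
    have K0: "0 \<le> K" unfolding K_def by (simp add: le_max_iff_disj)
    have "\<bar>norm (Du x) powr s - norm (Du y) powr s\<bar> \<le> \<bar>s\<bar> * K * \<bar>norm (Du x) - norm (Du y)\<bar>"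
      unfolding K_def using gl gM p assms(6) by (intro powr_lip) auto
    also have "\<dots> \<le> \<bar>s\<bar> * K * norm (Du x - Du y)"
      using K0 by (intro mult_left_mono norm_triangle_ineq3) auto
    finally have "\<bar>norm (Du x) powr s - norm (Du y) powr s\<bar> / dist x y powr \<beta>
        \<le> \<bar>s\<bar> * K * norm (Du x - Du y) / dist x y powr \<beta>"
      using dpos by (simp add: divide_right_mono)
    also have "\<dots> = \<bar>s\<bar> * K * q (x,y)" unfolding q_def by simp
    also have "\<dots> \<le> \<bar>s\<bar> * K * H" using qH[OF p(2-4)] K0 by (intro mult_left_mono) auto
    finally show "norm (norm (Du (fst p)) powr s - norm (Du (snd p)) powr s) / dist (fst p) (snd p) powr \<beta> \<le> \<bar>s\<bar> * K * H"
      using p by simp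
  qed
  have hn: "holder_norm \<beta> \<Omega> (\<lambda>x. norm (Du x) powr s) \<le> Bs + \<bar>s\<bar> * K * H"
    if "\<And>x. x \<in> \<Omega> \<Longrightarrow> norm (Du x) powr s \<le> Bs" for Bs
    unfolding holder_norm_def using supb[OF that] semb by linarith
  have l0: "0 < lambda1" by (rule assms(6))
  have hN: "holder_norm \<beta> \<Omega> Du = N" unfolding N_def M_def H_def holder_norm_def by simp
  show ?thesis
  proof (intro conjI impI)
    assume s1: "1 \<le> s"
    have K: "K = M powr (s-1)" unfolding K_def using s1 lM l0 by (intro max_absorb2 powr_mono2) auto
    have "\<bar>s\<bar> * K * H \<le> s * (N powr (s-1) * N)"
    proof -
      have "M powr (s-1) \<le> N powr (s-1)" using s1 M0 H0 unfolding N_def by (intro powr_mono2) auto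
      then have "M powr (s-1) * H \<le> N powr (s-1) * N" using HN H0 by (intro mult_mono) auto
      then show ?thesis unfolding K using s1 by (simp add: mult.assoc)
    qed
    also have "\<dots> = s * N powr s" using N0 by (simp add: powr_diff)
    finally have "\<bar>s\<bar> * K * H \<le> s * N powr s" .
    moreover have "0 \<le> s * N powr s" using s1 by simp
    ultimately have "\<bar>s\<bar> * K * H \<le> 2 * s * N powr s" by linarith
    moreover have "holder_norm \<beta> \<Omega> (\<lambda>x. norm (Du x) powr s) \<le> M powr s + \<bar>s\<bar> * K * H"
      using gM s1 by (intro hn powr_mono2) auto
    ultimately show "holder_norm \<beta> \<Omega> (\<lambda>x. norm (Du x) powr s)
             \<le> sup_norm \<Omega> Du powr s + 2 * s * holder_norm \<beta> \<Omega> Du powr s"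
      unfolding hN M_def by linarith
  next
    assume s: "0 < s \<and> s < 1"
    define k where "k = k_idx s"
    define e where "e = 2 ^ k * s"
    have e1: "1 \<le> e" unfolding e_def k_def using k_idx_ge s by auto
    have K: "K = lambda1 powr (s-1)" unfolding K_def using s lM l0 by (intro max_absorb1 powr_mono2') auto
    have "\<bar>s\<bar> * K * H = s * lambda1 powr s * (H / lambda1)"
      unfolding K using s l0 by (simp add: powr_diff)
    also have "\<dots> \<le> s * lambda1 powr s * (N / lambda1) powr e"
      using s l0 by (intro mult_left_mono key lN H0 HN e1 l0) auto
    also have "\<dots> \<le> 2 * s * lambda1 powr s * (N / lambda1) powr e"
      using s l0 by (simp add: mult_right_mono)
    also have "\<dots> = 2 * s / (\<Prod>j=1..k. lambda1 powr (2 ^ (j - 1) * s)) * N powr e"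
      unfolding prod_pow[OF l0] e_def using l0 N0
      by (simp add: powr_divide powr_diff algebra_simps)
    finally have "\<bar>s\<bar> * K * H \<le> 2 * s / (\<Prod>j=1..k. lambda1 powr (2 ^ (j - 1) * s)) * N powr e" .
    moreover have "holder_norm \<beta> \<Omega> (\<lambda>x. norm (Du x) powr s) \<le> M powr s + \<bar>s\<bar> * K * H"
      using gM s by (intro hn powr_mono2) auto
    ultimately show "holder_norm \<beta> \<Omega> (\<lambda>x. norm (Du x) powr s)
             \<le> sup_norm \<Omega> Du powr s
                + 2 * s / (\<Prod>j=1..k_idx s. lambda1 powr (2 ^ (j - 1) * s))
                  * holder_norm \<beta> \<Omega> Du powr (2 ^ k_idx s * s)"
      unfolding hN M_def k_def e_def by linarith
  next
    assume s: "-1 < s \<and> s < 0"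
    define a where "a = \<bar>s\<bar>"
    have a: "0 < a" "a < 1" "s = - a" using s unfolding a_def by auto
    define k where "k = k_idx a"
    define e where "e = 2 ^ k * a"
    have e1: "1 \<le> e" unfolding e_def k_def using k_idx_ge a by auto
    have K: "K = lambda1 powr (s-1)" unfolding K_def using s lM l0 by (intro max_absorb1 powr_mono2') auto
    have "\<bar>s\<bar> * K * H = a * lambda1 powr s * (H / lambda1)"
      unfolding K a_def using s l0 by (simp add: powr_diff)
    also have "\<dots> \<le> a * lambda1 powr s * (N / lambda1) powr e"
      using a l0 by (intro mult_left_mono key lN H0 HN e1 l0) auto
    also have "\<dots> \<le> 2 * a * lambda1 powr s * (N / lambda1) powr e"
      using a l0 by (simp add: mult_right_mono)
    also have "\<dots> = 2 * a / (lambda1 powr (2 * a) * (\<Prod>j=1..k. lambda1 powr (2 ^ (j - 1) * a))) * N powr e"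
    proof -
      have q1: "lambda1 powr (2 * a) * lambda1 powr ((2 ^ k - 1) * a) = lambda1 powr a * lambda1 powr (2 ^ k * a)"
        by (simp add: powr_add[symmetric] algebra_simps)
      have q2: "lambda1 powr s = inverse (lambda1 powr a)" unfolding a(3) by (simp add: powr_minus)
      have q3: "(N / lambda1) powr (2 ^ k * a) = N powr (2 ^ k * a) / lambda1 powr (2 ^ k * a)"
        by (rule powr_divide)
      show ?thesis unfolding prod_pow[OF l0] e_def mult.assoc[symmetric] q1 q2 q3
        using l0 by (simp add: field_simps)
    qed
    finally have "\<bar>s\<bar> * K * H \<le> 2 * a / (lambda1 powr (2 * a) * (\<Prod>j=1..k. lambda1 powr (2 ^ (j - 1) * a))) * N powr e" .
    moreover have "holder_norm \<beta> \<Omega> (\<lambda>x. norm (Du x) powr s) \<le> lambda1 powr s + \<bar>s\<bar> * K * H"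
      using gl s l0 by (intro hn powr_mono2') auto
    ultimately show "holder_norm \<beta> \<Omega> (\<lambda>x. norm (Du x) powr s)
             \<le> lambda1 powr s
                + 2 * \<bar>s\<bar> / (lambda1 powr (2 * \<bar>s\<bar>) * (\<Prod>j=1..k_idx \<bar>s\<bar>. lambda1 powr (2 ^ (j - 1) * \<bar>s\<bar>)))
                  * holder_norm \<beta> \<Omega> Du powr (2 ^ k_idx \<bar>s\<bar> * \<bar>s\<bar>)"
      unfolding hN k_def e_def a_def by linarith
  next
    assume s: "s \<le> -1"
    define a where "a = \<bar>s\<bar>"
    have a: "1 \<le> a" "s = - a" using s unfolding a_def by auto
    have K: "K = lambda1 powr (s-1)" unfolding K_def using s lM l0 by (intro max_absorb1 powr_mono2') auto
    have "\<bar>s\<bar> * K * H = a * lambda1 powr (2 * s) * (lambda1 powr (a - 1) * H)"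
      unfolding K a_def using s l0 by (simp add: powr_add[symmetric])
    also have "\<dots> \<le> a * lambda1 powr (2 * s) * (N powr (a - 1) * N)"
      using a l0 H0 lN HN by (intro mult_left_mono mult_mono powr_mono2) auto
    also have "\<dots> = 2 * a * lambda1 powr (2 * s) * N powr a - a * lambda1 powr (2 * s) * N powr a"
      using N0 by (simp add: powr_diff)
    also have "\<dots> \<le> 2 * a * lambda1 powr (2 * s) * N powr a"
      using a by simp
    finally have "\<bar>s\<bar> * K * H \<le> 2 * a * lambda1 powr (2 * s) * N powr a" .
    moreover have "holder_norm \<beta> \<Omega> (\<lambda>x. norm (Du x) powr s) \<le> lambda1 powr s + \<bar>s\<bar> * K * H"
      using gl s l0 by (intro hn powr_mono2') auto
    ultimately show "holder_norm \<beta> \<Omega> (\<lambda>x. norm (Du x) powr s)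
             \<le> lambda1 powr s + 2 * \<bar>s\<bar> * lambda1 powr (2 * s) * holder_norm \<beta> \<Omega> Du powr \<bar>s\<bar>"
      unfolding hN a_def by linarith
  qed
qed

end
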